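(* Let $\lambda\supseteq\mu$ be partitions, $T$ a cover-expansive Dyck tiling of $\lambda\setminus\mu$, and $\mathfrak a$ a node such that $\mathfrak a$ and $\mathtt N(\mathfrak a)$ both lie in $\lambda\setminus\mu$. Then $\operatorname{dp}(\mathtt N(\mathfrak a))<\operatorname{dp}(\mathfrak a)$.
   Context: Partitions are identified with Young diagrams $\{(a,b)\in\mathbb N^2:b\le\lambda_a\}$; nodes are elements of $\mathbb N^2$; $(a,b)$ has height $\operatorname{ht}(a,b)=a+b$ and lies in column $b-a$ (smaller column = further left). $\mathtt{NE}(\mathfrak n)=\mathfrak n+(0,1)$, $\mathtt{SW}(\mathfrak n)=\mathfrak n-(0,1)$, $\mathtt{SE}(\mathfrak n)=\mathfrak n-(1,0)$, $\mathtt N(\mathfrak n)=\mathfrak n+(1,1)$. A tile is a finite nonempty set $t$ of nodes orderable $\mathfrak n_1,\dots,\mathfrak n_r$ with $\mathfrak n_{i+1}\in\{\mathtt{NE}(\mathfrak n_i),\mathtt{SE}(\mathfrak n_i)\}$; start = leftmost node, end = rightmost node; $\operatorname{ht}(t)$ is the maximum height of its nodes; Dyck tile if start and end have height $\operatorname{ht}(t)$. The depth of $\mathfrak n\in t$ is $\operatorname{dp}(\mathfrak n)=\operatorname{ht}(t)-\operatorname{ht}(\mathfrak n)$. A Dyck tiling of $\lambda\setminus\mu$ is a partition of it into Dyck tiles. It is cover-expansive if (left) whenever $\mathfrak a,\mathtt{SE}(\mathfrak a)\in\lambda\setminus\mu$, the tile of $\mathtt{SE}(\mathfrak a)$ starts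 weakly left of the start of the tile of $\mathfrak a$, and (right) whenever $\mathfrak a,\mathtt{SW}(\mathfrak a)\in\lambda\setminus\mu$, the tile of $\mathtt{SW}(\mathfrak a)$ ends weakly right of the end of the tile of $\mathfrak a$. *)

theory Defs
  imports Main
begin

type_synonym node = "int \<times> int"

text \<open>A partition is identified with its Young diagram: a finite set of nodes with
 positive coordinates that is closed downwards, i.e. of the form
 {(a,b). b \<le> lambda_a} for a weakly decreasing, eventually zero sequence lambda.\<close>

definition is_partition :: "node set \<Rightarrow> bool" where
  "is_partition L \<longleftrightarrow> finite L \<and>
     (\<forall>(a,b)\<in>L. 1 \<le> a \<and> 1 \<le> b) \<and>
     (\<forall>a b a' b'. (a,b) \<in> L \<and> 1 \<le> a' \<and> a' \<le> a \<and> 1 \<le> b' \<and> b' \<le> b \<longrightarrow> (a',b') \<in> L)"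

definition ht :: "node \<Rightarrow> int" where "ht n = fst n + snd n"
definition col :: "node \<Rightarrow> int" where "col n = snd n - fst n"

definition NE :: "node \<Rightarrow> node" where "NE n = (fst n, snd n + 1)"
definition SW :: "node \<Rightarrow> node" where "SW n = (fst n, snd n - 1)"
definition SE :: "node \<Rightarrow> node" where "SE n = (fst n - 1, snd n)"
definition Nn :: "node \<Rightarrow> node" where "Nn n = (fst n + 1, snd n + 1)"

definition is_tile :: "node set \<Rightarrow> bool" where
  "is_tile t \<longleftrightarrow> (\<exists>ns. ns \<noteq> [] \<and> set ns = t \<and>
      (\<forall>i. Suc i < length ns \<longrightarrow> ns ! Suc i \<in> {NE (ns ! i), SE (ns ! i)}))"

definition tile_start :: "node set \<Rightarrow> node" where
  "tile_start t = (THE n. n \<in> t \<and> (\<forall>m\<in>t. col n \<le> col m))"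

definition tile_end :: "node set \<Rightarrow> node" where
  "tile_end t = (THE n. n \<in> t \<and> (\<forall>m\<in>t. col m \<le> col n))"

definition tile_ht :: "node set \<Rightarrow> int" where
  "tile_ht t = Max (ht ` t)"

definition is_dyck_tile :: "node set \<Rightarrow> bool" where
  "is_dyck_tile t \<longleftrightarrow> is_tile t \<and> ht (tile_start t) = tile_ht t \<and> ht (tile_end t) = tile_ht t"

definition is_dyck_tiling :: "node set set \<Rightarrow> node set \<Rightarrow> node set \<Rightarrow> bool" where
  "is_dyck_tiling T L M \<longleftrightarrow> (\<forall>t\<in>T. is_dyck_tile t) \<and>
     (\<forall>t\<in>T. \<forall>s\<in>T. t \<noteq> s \<longrightarrow> t \<inter> s = {}) \<and> \<Union>T = L - M"

definition tile_of :: "node set set \<Rightarrow> node \<Rightarrow> node set" where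
  "tile_of T n = (THE t. t \<in> T \<and> n \<in> t)"

definition dp :: "node set set \<Rightarrow> node \<Rightarrow> int" where
  "dp T n = tile_ht (tile_of T n) - ht n"

definition cover_expansive :: "node set set \<Rightarrow> node set \<Rightarrow> node set \<Rightarrow> bool" where
  "cover_expansive T L M \<longleftrightarrow>
     (\<forall>a. a \<in> L - M \<and> SE a \<in> L - M \<longrightarrow>
        col (tile_start (tile_of T (SE a))) \<le> col (tile_start (tile_of T a))) \<and>
     (\<forall>a. a \<in> L - M \<and> SW a \<in> L - M \<longrightarrow>
        col (tile_end (tile_of T a)) \<le> col (tile_end (tile_of T (SW a))))"

end

theory Submission
  imports Defs
begin

definition NWn :: "node \<Rightarrow> node" where "NWn n = (fst n + 1, snd n)"

lemma tile_col:
  assumes "\<forall>i. Suc i < length ns \<longrightarrow> ns ! Suc i \<in> {NE (ns ! i), SE (ns ! i)}" "i < length ns"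
  shows "col (ns!i) = col (ns!0) + int i"
  using assms(2)
proof (induction i)
  case 0 then show ?case by simp
next
  case (Suc i)
  then have "ns ! Suc i \<in> {NE (ns ! i), SE (ns ! i)}" using assms(1) by blast
  then have "col (ns ! Suc i) = col (ns!i) + 1" by (auto simp: col_def NE_def SE_def)
  then show ?case using Suc by simp
qed

lemma tile_obtain:
  assumes "is_tile t"
  obtains ns where "ns \<noteq> []" "set ns = t"
    "\<forall>i. Suc i < length ns \<longrightarrow> ns ! Suc i \<in> {NE (ns ! i), SE (ns ! i)}"
  using assms unfolding is_tile_def by blast

lemma col_inj:
  assumes "is_tile t" "x \<in> t" "y \<in> t" "col x = col y" shows "x = y"
proof -
  obtain ns where ns: "ns \<noteq> []" "set ns = t" "\<forall>i. Suc i < length ns \<longrightarrow> ns ! Suc i \<in> {NE (ns ! i), SE (ns ! i)}"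
    using tile_obtain[OF assms(1)] by blast
  obtain i j where ij: "i < length ns" "x = ns!i" "j < length ns" "y = ns!j"
    using assms ns(2) by (metis in_set_conv_nth)
  then have "col x = col (ns!0) + int i" "col y = col (ns!0) + int j"
    using tile_col[OF ns(3)] by auto
  then have "i = j" using assms(4) by simp
  then show ?thesis using ij by simp
qed

lemma tile_finite: "is_tile t \<Longrightarrow> finite t"
  by (metis tile_obtain List.finite_set)

lemma start_props:
  assumes "is_tile t" shows "tile_start t \<in> t \<and> (\<forall>m\<in>t. col (tile_start t) \<le> col m)"
proof -
  obtain ns where ns: "ns \<noteq> []" "set ns = t" "\<forall>i. Suc i < length ns \<longrightarrow> ns ! Suc i \<in> {NE (ns ! i), SE (ns ! i)}"
    using tile_obtain[OF assms(1)] by blast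
  have ex: "ns!0 \<in> t \<and> (\<forall>m\<in>t. col (ns!0) \<le> col m)"
  proof
    show "ns!0 \<in> t" using ns by auto
    show "\<forall>m\<in>t. col (ns!0) \<le> col m"
    proof
      fix m assume "m \<in> t"
      then obtain j where "j < length ns" "m = ns!j" using ns(2) by (metis in_set_conv_nth)
      then show "col (ns!0) \<le> col m" using tile_col[OF ns(3)] by auto
    qed
  qed
  show ?thesis unfolding tile_start_def
  proof (rule theI[of _ "ns!0"])
    show "ns!0 \<in> t \<and> (\<forall>m\<in>t. col (ns!0) \<le> col m)" by (rule ex)
    fix n assume "n \<in> t \<and> (\<forall>m\<in>t. col n \<le> col m)"
    then show "n = ns!0" using ex col_inj[OF assms] by (meson order_antisym)
  qed
qed

lemma end_props:
  assumes "is_tile t" shows "tile_end t \<in> t \<and> (\<forall>m\<in>t. col m \<le> col (tile_end t))"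
proof -
  obtain ns where ns: "ns \<noteq> []" "set ns = t" "\<forall>i. Suc i < length ns \<longrightarrow> ns ! Suc i \<in> {NE (ns ! i), SE (ns ! i)}"
    using tile_obtain[OF assms(1)] by blast
  define e where "e = ns ! (length ns - 1)"
  have ex: "e \<in> t \<and> (\<forall>m\<in>t. col m \<le> col e)"
  proof
    show "e \<in> t" using ns unfolding e_def by auto
    show "\<forall>m\<in>t. col m \<le> col e"
    proof
      fix m assume "m \<in> t"
      then obtain j where "j < length ns" "m = ns!j" using ns(2) by (metis in_set_conv_nth)
      then show "col m \<le> col e" using tile_col[OF ns(3)] ns(1) unfolding e_def
        by (metis diff_less length_greater_0_conv less_numeral_extra(1) add_le_cancel_left
             of_nat_le_iff less_Suc_eq_le Suc_pred')
    qed
  qed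
  show ?thesis unfolding tile_end_def
  proof (rule theI[of _ e])
    show "e \<in> t \<and> (\<forall>m\<in>t. col m \<le> col e)" by (rule ex)
    fix n assume "n \<in> t \<and> (\<forall>m\<in>t. col m \<le> col n)"
    then show "n = e" using ex col_inj[OF assms] by (meson order_antisym)
  qed
qed

lemma left_nb:
  assumes "is_tile t" "x \<in> t" "col (tile_start t) < col x" shows "SW x \<in> t \<or> NWn x \<in> t"
proof -
  obtain ns where ns: "ns \<noteq> []" "set ns = t" "\<forall>i. Suc i < length ns \<longrightarrow> ns ! Suc i \<in> {NE (ns ! i), SE (ns ! i)}"
    using tile_obtain[OF assms(1)] by blast
  obtain i where i: "i < length ns" "x = ns!i" using assms ns(2) by (metis in_set_conv_nth)
  obtain j where j: "j < length ns" "tile_start t = ns!j" using start_props[OF assms(1)] ns(2) by (metis in_set_conv_nth)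
  have "col x = col (ns!0) + int i" "col (tile_start t) = col (ns!0) + int j"
    using tile_col[OF ns(3)] i j by auto
  then have "i > 0" using assms(3) by simp
  then obtain k where k: "i = Suc k" using gr0_implies_Suc by blast
  then have "x \<in> {NE (ns ! k), SE (ns ! k)}" using ns(3) i by blast
  moreover have "ns ! k \<in> t" using ns(2) i k by auto
  ultimately show ?thesis by (auto simp: SW_def NWn_def NE_def SE_def)
qed

lemma right_nb:
  assumes "is_tile t" "x \<in> t" "col x < col (tile_end t)" shows "NE x \<in> t \<or> SE x \<in> t"
proof -
  obtain ns where ns: "ns \<noteq> []" "set ns = t" "\<forall>i. Suc i < length ns \<longrightarrow> ns ! Suc i \<in> {NE (ns ! i), SE (ns ! i)}"
    using tile_obtain[OF assms(1)] by blast
  obtain i where i: "i < length ns" "x = ns!i" using assms ns(2) by (metis in_set_conv_nth)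
  obtain j where j: "j < length ns" "tile_end t = ns!j" using end_props[OF assms(1)] ns(2) by (metis in_set_conv_nth)
  have "col x = col (ns!0) + int i" "col (tile_end t) = col (ns!0) + int j"
    using tile_col[OF ns(3)] i j by auto
  then have "i < j" using assms(3) by simp
  then have "Suc i < length ns" using j by simp
  then have "ns ! Suc i \<in> {NE x, SE x}" using ns(3) i by blast
  moreover have "ns ! Suc i \<in> t" using ns(2) \<open>Suc i < length ns\<close> by auto
  ultimately show ?thesis by auto
qed

lemma ht_le: "is_tile t \<Longrightarrow> n \<in> t \<Longrightarrow> ht n \<le> tile_ht t"
  unfolding tile_ht_def using tile_finite by (simp add: Max_ge)

lemma tile_of_eq: "is_dyck_tiling T L M \<Longrightarrow> t \<in> T \<Longrightarrow> n \<in> t \<Longrightarrow> tile_of T n = t"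
  unfolding tile_of_def is_dyck_tiling_def by (rule the_equality) blast+

lemma tile_ex: "is_dyck_tiling T L M \<Longrightarrow> n \<in> L - M \<Longrightarrow> \<exists>t\<in>T. n \<in> t"
  unfolding is_dyck_tiling_def by blast

lemma in_LM: "is_dyck_tiling T L M \<Longrightarrow> t \<in> T \<Longrightarrow> n \<in> t \<Longrightarrow> n \<in> L - M"
  unfolding is_dyck_tiling_def by blast

lemma is_tile_T: "is_dyck_tiling T L M \<Longrightarrow> t \<in> T \<Longrightarrow> is_tile t"
  unfolding is_dyck_tiling_def is_dyck_tile_def by blast

lemma disj: "is_dyck_tiling T L M \<Longrightarrow> t \<in> T \<Longrightarrow> s \<in> T \<Longrightarrow> n \<in> t \<Longrightarrow> n \<in> s \<Longrightarrow> s = t"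
  unfolding is_dyck_tiling_def by blast

lemma diamond:
  assumes "is_partition L" "is_partition M" "x \<in> L - M" "Nn x \<in> L - M"
  shows "NWn x \<in> L - M \<and> NE x \<in> L - M"
proof -
  obtain p q where x: "x = (p,q)" by fastforce
  have pq: "1 \<le> p" "1 \<le> q" using assms(1,3) x unfolding is_partition_def by auto
  have yL: "(p+1,q+1) \<in> L" using assms(4) x by (simp add: Nn_def)
  have dc: "\<forall>a b a' b'. (a, b) \<in> L \<and> 1 \<le> a' \<and> a' \<le> a \<and> 1 \<le> b' \<and> b' \<le> b \<longrightarrow> (a', b') \<in> L"
    using assms(1) unfolding is_partition_def by blast
  have dcM: "\<forall>a b a' b'. (a, b) \<in> M \<and> 1 \<le> a' \<and> a' \<le> a \<and> 1 \<le> b' \<and> b' \<le> b \<longrightarrow> (a', b') \<in> M"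
    using assms(2) unfolding is_partition_def by blast
  have "(p+1,q) \<in> L" using dc yL pq by (meson order.refl le_add_same_cancel1 zero_le_one order_trans)
  moreover have "(p,q+1) \<in> L" using dc yL pq by (meson order.refl le_add_same_cancel1 zero_le_one order_trans)
  moreover have "(p+1,q) \<notin> M" using dcM assms(3) x pq
    by (metis DiffD2 order.refl le_add_same_cancel1 zero_le_one)
  moreover have "(p,q+1) \<notin> M" using dcM assms(3) x pq
    by (metis DiffD2 order.refl le_add_same_cancel1 zero_le_one)
  ultimately show ?thesis using x by (simp add: NWn_def NE_def)
qed

lemma step_left:
  assumes tl: "is_dyck_tiling T L M" and ce: "cover_expansive T L M"
    and pL: "is_partition L" and pM: "is_partition M"
    and t: "t \<in> T" and t': "t' \<in> T" and x: "x \<in> t" and y: "Nn x \<in> t'"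
    and st: "col (tile_start t) \<le> col (tile_start t')"
  shows "(Nn x = tile_start t' \<and> ht x + 1 \<le> tile_ht t) \<or> (\<exists>x'. x' \<in> t \<and> Nn x' \<in> t' \<and> col x' = col x - 1)"
proof -
  have it: "is_tile t" "is_tile t'" using is_tile_T[OF tl] t t' by auto
  have xLM: "x \<in> L - M" and yLM: "Nn x \<in> L - M" using in_LM[OF tl] t t' x y by auto
  have dLM: "NWn x \<in> L - M" using diamond[OF pL pM xLM yLM] by blast
  have neq: "t \<noteq> t'"
  proof
    assume "t = t'"
    then have "x = Nn x" using col_inj[OF it(1) x] y by (simp add: col_def Nn_def)
    then show False by (simp add: Nn_def prod_eq_iff)
  qed
  obtain s where s: "s \<in> T" "NWn x \<in> s" using tile_ex[OF tl dLM] by blast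
  have its: "is_tile s" using is_tile_T[OF tl s(1)] .
  have "SW (Nn x) = NWn x" by (simp add: SW_def Nn_def NWn_def)
  then have "col (tile_end (tile_of T (Nn x))) \<le> col (tile_end (tile_of T (NWn x)))"
    using ce yLM dLM unfolding cover_expansive_def by metis
  then have ce1: "col (tile_end t') \<le> col (tile_end s)"
    using tile_of_eq[OF tl] s t' y by simp
  have cy: "col (Nn x) \<le> col (tile_end t')" using end_props[OF it(2)] y by blast
  have cd: "col (NWn x) = col x - 1" "col (Nn x) = col x" by (auto simp: col_def NWn_def Nn_def)
  have "NE (NWn x) \<in> s \<or> SE (NWn x) \<in> s"
    using right_nb[OF its s(2)] ce1 cy cd by linarith
  moreover have "NE (NWn x) = Nn x" "SE (NWn x) = x" by (auto simp: NE_def NWn_def Nn_def SE_def)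
  ultimately have "s = t' \<or> s = t" using disj[OF tl] s t t' x y by metis
  show ?thesis
  proof (cases "Nn x = tile_start t'")
    case True
    have "s \<noteq> t'"
    proof
      assume "s = t'"
      then have "col (tile_start t') \<le> col (NWn x)" using start_props[OF it(2)] s by blast
      then show False using True cd by simp
    qed
    then have "s = t" using \<open>s = t' \<or> s = t\<close> by blast
    then have "ht (NWn x) \<le> tile_ht t" using ht_le[OF it(1)] s by blast
    moreover have "ht (NWn x) = ht x + 1" by (simp add: ht_def NWn_def)
    ultimately show ?thesis using True by simp
  next
    case False
    have "col (tile_start t') \<le> col (Nn x)" using start_props[OF it(2)] y by blast
    moreover have "col (tile_start t') \<noteq> col (Nn x)"
      using col_inj[OF it(2) _ y] start_props[OF it(2)] False by metis
    ultimately have lt: "col (tile_start t') < col (Nn x)" by simp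
    have "SW (Nn x) \<in> t' \<or> NWn (Nn x) \<in> t'" using left_nb[OF it(2) y lt] .
    moreover have "SW (Nn x) = NWn x" "NWn (Nn x) = Nn (NWn x)" by (auto simp: SW_def Nn_def NWn_def)
    ultimately have "NWn x \<in> t' \<or> Nn (NWn x) \<in> t'" by simp
    then show ?thesis
    proof
      assume dt': "NWn x \<in> t'"
      have "col (tile_start t) < col x" using st lt cd by simp
      then have "SW x \<in> t \<or> NWn x \<in> t" using left_nb[OF it(1) x] by blast
      moreover have "NWn x \<notin> t" using dt' neq disj[OF tl t t'] by blast
      ultimately have "SW x \<in> t" by blast
      moreover have "Nn (SW x) = NWn x" by (simp add: SW_def Nn_def NWn_def)
      moreover have "col (SW x) = col x - 1" by (simp add: SW_def col_def)
      ultimately show ?thesis using dt' by metis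
    next
      assume ndt': "Nn (NWn x) \<in> t'"
      have "s \<noteq> t'"
      proof
        assume "s = t'"
        then have "NWn x = Nn (NWn x)" using col_inj[OF it(2) _ ndt'] s by (simp add: col_def Nn_def)
        then show False by (simp add: Nn_def prod_eq_iff)
      qed
      then have "s = t" using \<open>s = t' \<or> s = t\<close> by blast
      then show ?thesis using s ndt' cd by metis
    qed
  qed
qed

lemma step_right:
  assumes tl: "is_dyck_tiling T L M" and ce: "cover_expansive T L M"
    and pL: "is_partition L" and pM: "is_partition M"
    and t: "t \<in> T" and t': "t' \<in> T" and x: "x \<in> t" and y: "Nn x \<in> t'"
    and st: "col (tile_end t') \<le> col (tile_end t)"
  shows "(Nn x = tile_end t' \<and> ht x + 1 \<le> tile_ht t) \<or> (\<exists>x'. x' \<in> t \<and> Nn x' \<in> t' \<and> col x' = col x + 1)"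
proof -
  have it: "is_tile t" "is_tile t'" using is_tile_T[OF tl] t t' by auto
  have xLM: "x \<in> L - M" and yLM: "Nn x \<in> L - M" using in_LM[OF tl] t t' x y by auto
  have cLM: "NE x \<in> L - M" using diamond[OF pL pM xLM yLM] by blast
  have neq: "t \<noteq> t'"
  proof
    assume "t = t'"
    then have "x = Nn x" using col_inj[OF it(1) x] y by (simp add: col_def Nn_def)
    then show False by (simp add: Nn_def prod_eq_iff)
  qed
  obtain s where s: "s \<in> T" "NE x \<in> s" using tile_ex[OF tl cLM] by blast
  have its: "is_tile s" using is_tile_T[OF tl s(1)] .
  have "SE (Nn x) = NE x" by (simp add: SE_def Nn_def NE_def)
  then have "col (tile_start (tile_of T (NE x))) \<le> col (tile_start (tile_of T (Nn x)))"
    using ce yLM cLM unfolding cover_expansive_def by metis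
  then have ce1: "col (tile_start s) \<le> col (tile_start t')"
    using tile_of_eq[OF tl] s t' y by simp
  have cy: "col (tile_start t') \<le> col (Nn x)" using start_props[OF it(2)] y by blast
  have cd: "col (NE x) = col x + 1" "col (Nn x) = col x" by (auto simp: col_def NE_def Nn_def)
  have "SW (NE x) \<in> s \<or> NWn (NE x) \<in> s"
    using left_nb[OF its s(2)] ce1 cy cd by linarith
  moreover have "SW (NE x) = x" "NWn (NE x) = Nn x" by (auto simp: NE_def NWn_def Nn_def SW_def)
  ultimately have "s = t' \<or> s = t" using disj[OF tl] s t t' x y by metis
  show ?thesis
  proof (cases "Nn x = tile_end t'")
    case True
    have "s \<noteq> t'"
    proof
      assume "s = t'"
      then have "col (NE x) \<le> col (tile_end t')" using end_props[OF it(2)] s by blast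
      then show False using True cd by simp
    qed
    then have "s = t" using \<open>s = t' \<or> s = t\<close> by blast
    then have "ht (NE x) \<le> tile_ht t" using ht_le[OF it(1)] s by blast
    moreover have "ht (NE x) = ht x + 1" by (simp add: ht_def NE_def)
    ultimately show ?thesis using True by simp
  next
    case False
    have "col (Nn x) \<le> col (tile_end t')" using end_props[OF it(2)] y by blast
    moreover have "col (tile_end t') \<noteq> col (Nn x)"
      using col_inj[OF it(2) _ y] end_props[OF it(2)] False by metis
    ultimately have lt: "col (Nn x) < col (tile_end t')" by simp
    have "NE (Nn x) \<in> t' \<or> SE (Nn x) \<in> t'" using right_nb[OF it(2) y lt] .
    moreover have "SE (Nn x) = NE x" "NE (Nn x) = Nn (NE x)" by (auto simp: SE_def Nn_def NE_def)
    ultimately have "NE x \<in> t' \<or> Nn (NE x) \<in> t'" by auto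
    then show ?thesis
    proof
      assume dt': "NE x \<in> t'"
      have "col x < col (tile_end t)" using st lt cd by simp
      then have "NE x \<in> t \<or> SE x \<in> t" using right_nb[OF it(1) x] by blast
      moreover have "NE x \<notin> t" using dt' neq disj[OF tl t t'] by blast
      ultimately have "SE x \<in> t" by blast
      moreover have "Nn (SE x) = NE x" by (simp add: SE_def Nn_def NE_def)
      moreover have "col (SE x) = col x + 1" by (simp add: SE_def col_def)
      ultimately show ?thesis using dt' by metis
    next
      assume ndt': "Nn (NE x) \<in> t'"
      have "s \<noteq> t'"
      proof
        assume "s = t'"
        then have "NE x = Nn (NE x)" using col_inj[OF it(2) _ ndt'] s by (simp add: col_def Nn_def)
        then show False by (simp add: Nn_def prod_eq_iff)
      qed
      then have "s = t" using \<open>s = t' \<or> s = t\<close> by blast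
      then show ?thesis using s ndt' cd by metis
    qed
  qed
qed

lemma dyck_T: "is_dyck_tiling T L M \<Longrightarrow> t \<in> T \<Longrightarrow> ht (tile_start t) = tile_ht t \<and> ht (tile_end t) = tile_ht t"
  unfolding is_dyck_tiling_def is_dyck_tile_def by blast

lemma iter_left:
  assumes tl: "is_dyck_tiling T L M" and ce: "cover_expansive T L M"
    and pL: "is_partition L" and pM: "is_partition M"
    and t: "t \<in> T" and t': "t' \<in> T"
    and st: "col (tile_start t) \<le> col (tile_start t')"
  shows "x \<in> t \<Longrightarrow> Nn x \<in> t' \<Longrightarrow> nat (col (Nn x) - col (tile_start t')) = n \<Longrightarrow> tile_ht t' \<le> tile_ht t + 1"
proof (induction n arbitrary: x)
  case 0
  note S = step_left[OF tl ce pL pM t t' 0(1,2) st]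
  show ?case
  proof (rule disjE[OF S])
    assume h: "Nn x = tile_start t' \<and> ht x + 1 \<le> tile_ht t"
    then have "tile_ht t' = ht (Nn x)" using dyck_T[OF tl t'] by simp
    moreover have "ht (Nn x) = ht x + 2" by (simp add: ht_def Nn_def)
    ultimately show ?thesis using h by linarith
  next
    assume "\<exists>x'. x' \<in> t \<and> Nn x' \<in> t' \<and> col x' = col x - 1"
    then obtain x' where x': "Nn x' \<in> t'" "col x' = col x - 1" by blast
    have "col (tile_start t') \<le> col (Nn x')" using start_props[OF is_tile_T[OF tl t']] x' by blast
    then show ?thesis using 0(3) x' by (simp add: col_def Nn_def)
  qed
next
  case (Suc n)
  note S = step_left[OF tl ce pL pM t t' Suc(2,3) st]
  show ?case
  proof (rule disjE[OF S])
    assume h: "Nn x = tile_start t' \<and> ht x + 1 \<le> tile_ht t"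
    then have "tile_ht t' = ht (Nn x)" using dyck_T[OF tl t'] by simp
    moreover have "ht (Nn x) = ht x + 2" by (simp add: ht_def Nn_def)
    ultimately show ?thesis using h by linarith
  next
    assume "\<exists>x'. x' \<in> t \<and> Nn x' \<in> t' \<and> col x' = col x - 1"
    then obtain x' where x': "x' \<in> t" "Nn x' \<in> t'" "col x' = col x - 1" by blast
    have "nat (col (Nn x') - col (tile_start t')) = n" using Suc(4) x'(3) by (simp add: col_def Nn_def)
    then show ?thesis using Suc.IH x' by blast
  qed
qed

lemma iter_right:
  assumes tl: "is_dyck_tiling T L M" and ce: "cover_expansive T L M"
    and pL: "is_partition L" and pM: "is_partition M"
    and t: "t \<in> T" and t': "t' \<in> T"
    and st: "col (tile_end t') \<le> col (tile_end t)"
  shows "x \<in> t \<Longrightarrow> Nn x \<in> t' \<Longrightarrow> nat (col (tile_end t') - col (Nn x)) = n \<Longrightarrow> tile_ht t' \<le> tile_ht t + 1"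
proof (induction n arbitrary: x)
  case 0
  note S = step_right[OF tl ce pL pM t t' 0(1,2) st]
  show ?case
  proof (rule disjE[OF S])
    assume h: "Nn x = tile_end t' \<and> ht x + 1 \<le> tile_ht t"
    then have "tile_ht t' = ht (Nn x)" using dyck_T[OF tl t'] by simp
    moreover have "ht (Nn x) = ht x + 2" by (simp add: ht_def Nn_def)
    ultimately show ?thesis using h by linarith
  next
    assume "\<exists>x'. x' \<in> t \<and> Nn x' \<in> t' \<and> col x' = col x + 1"
    then obtain x' where x': "Nn x' \<in> t'" "col x' = col x + 1" by blast
    have "col (Nn x') \<le> col (tile_end t')" using end_props[OF is_tile_T[OF tl t']] x' by blast
    then show ?thesis using 0(3) x' by (simp add: col_def Nn_def)
  qed
next
  case (Suc n)
  note S = step_right[OF tl ce pL pM t t' Suc(2,3) st]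
  show ?case
  proof (rule disjE[OF S])
    assume h: "Nn x = tile_end t' \<and> ht x + 1 \<le> tile_ht t"
    then have "tile_ht t' = ht (Nn x)" using dyck_T[OF tl t'] by simp
    moreover have "ht (Nn x) = ht x + 2" by (simp add: ht_def Nn_def)
    ultimately show ?thesis using h by linarith
  next
    assume "\<exists>x'. x' \<in> t \<and> Nn x' \<in> t' \<and> col x' = col x + 1"
    then obtain x' where x': "x' \<in> t" "Nn x' \<in> t'" "col x' = col x + 1" by blast
    have "nat (col (tile_end t') - col (Nn x')) = n" using Suc(4) x'(3) by (simp add: col_def Nn_def)
    then show ?thesis using Suc.IH x' by blast
  qed
qed

lemma dichotomy:
  assumes tl: "is_dyck_tiling T L M" and ce: "cover_expansive T L M"
    and pL: "is_partition L" and pM: "is_partition M"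
    and t: "t \<in> T" and t': "t' \<in> T" and x: "x \<in> t" and y: "Nn x \<in> t'"
  shows "col (tile_start t) \<le> col (tile_start t') \<or> col (tile_end t') \<le> col (tile_end t)"
proof -
  have it: "is_tile t" "is_tile t'" using is_tile_T[OF tl] t t' by auto
  have xLM: "x \<in> L - M" and yLM: "Nn x \<in> L - M" using in_LM[OF tl] t t' x y by auto
  have cLM: "NE x \<in> L - M" using diamond[OF pL pM xLM yLM] by blast
  obtain s where s: "s \<in> T" "NE x \<in> s" using tile_ex[OF tl cLM] by blast
  have its: "is_tile s" using is_tile_T[OF tl s(1)] .
  have "SE (Nn x) = NE x" by (simp add: SE_def Nn_def NE_def)
  then have "col (tile_start (tile_of T (NE x))) \<le> col (tile_start (tile_of T (Nn x)))"
    using ce yLM cLM unfolding cover_expansive_def by metis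
  then have ce1: "col (tile_start s) \<le> col (tile_start t')"
    using tile_of_eq[OF tl] s t' y by simp
  have cy: "col (tile_start t') \<le> col (Nn x)" using start_props[OF it(2)] y by blast
  have cd: "col (NE x) = col x + 1" "col (Nn x) = col x" by (auto simp: col_def NE_def Nn_def)
  have "SW (NE x) \<in> s \<or> NWn (NE x) \<in> s"
    using left_nb[OF its s(2)] ce1 cy cd by linarith
  moreover have "SW (NE x) = x" "NWn (NE x) = Nn x" by (auto simp: NE_def NWn_def Nn_def SW_def)
  ultimately have "s = t' \<or> s = t" using disj[OF tl] s t t' x y by metis
  then show ?thesis
  proof
    assume "s = t"
    then show ?thesis using ce1 by simp
  next
    assume st': "s = t'"
    have "SW (NE x) = x" by (simp add: NE_def SW_def)
    then have "col (tile_end (tile_of T (NE x))) \<le> col (tile_end (tile_of T x))"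
      using ce xLM cLM unfolding cover_expansive_def by metis
    then show ?thesis using tile_of_eq[OF tl] s t x st' by simp
  qed
qed

theorem lemma4p4:
  fixes L M :: "node set" and T :: "node set set" and a :: node
  assumes "is_partition L" and "is_partition M" and "M \<subseteq> L"
    and "is_dyck_tiling T L M" and "cover_expansive T L M"
    and "a \<in> L - M" and "Nn a \<in> L - M"
  shows "dp T (Nn a) < dp T a"
proof -
  obtain t where t: "t \<in> T" "a \<in> t" using tile_ex[OF assms(4,6)] by blast
  obtain t' where t': "t' \<in> T" "Nn a \<in> t'" using tile_ex[OF assms(4,7)] by blast
  have "tile_ht t' \<le> tile_ht t + 1"
    using dichotomy[OF assms(4,5,1,2) t(1) t'(1) t(2) t'(2)]
      iter_left[OF assms(4,5,1,2) t(1) t'(1) _ t(2) t'(2) refl]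
      iter_right[OF assms(4,5,1,2) t(1) t'(1) _ t(2) t'(2) refl] by blast
  then show ?thesis unfolding dp_def using tile_of_eq[OF assms(4)] t t'
    by (simp add: ht_def Nn_def)
qed

end
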